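(* Fix $m>0$ and $a\in\mathbb R$ with $|a|<m$, and consider the subextremal Kerr spacetime in Boyer--Lindquist coordinates $(t,r,\vartheta,\varphi)$ on the exterior region $r>r_+:=m+\sqrt{m^2-a^2}$, $$\mathfrak g_{m,a}=-\Big(1-\frac{2mr}{\rho^2}\Big)dt^2-\frac{4mar\sin^2\vartheta}{\rho^2}dt\,d\varphi+\frac{\rho^2}{\Delta}dr^2+\rho^2d\vartheta^2+\frac{\Lambda}{\rho^2}\sin^2\vartheta\,d\varphi^2,$$ with $\rho^2=r^2+a^2\cos^2\vartheta$, $\Delta=r^2-2mr+a^2$, $\Lambda=(r^2+a^2)^2-a^2\Delta\sin^2\vartheta$. Then each hypersurface $\{t=\mathrm{const},\ r>r_+\}$ is tangentially maximal; more precisely, the coordinate spheres $\{S_r\}_{r>r_+}$ form a TMCF foliation of each constant-$t$ exterior slice. Equivalently, every constant graph $f\equiv T_0$ solves the TMCF equation on the Kerr exterior.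
   Context: A foliation $\{S_r\}$ of a spacelike hypersurface $M$ (with second fundamental form $K$ in the spacetime) by closed spacelike surfaces is a TMCF foliation if the spacetime mean curvature vector of each leaf is tangent to $M$, equivalently $\mathrm{tr}_{S_r}K=0$ (the trace of $K$ over $TS_r$ with the induced metric) on every leaf; $M$ with such a foliation is called tangentially maximal. For a graph $t=f(r,\vartheta,\varphi)$, "$f$ solves the TMCF equation" means the spheres $\{r=\mathrm{const}\}$ of the graph form a TMCF foliation of the graph. *)

theory Defs
  imports "HOL-Analysis.Analysis"
begin

text \<open>Coordinates on spacetime: x = (x$0, x$1, x$2, x$3) = (t, r, theta, phi).
  Coordinates on a graph t = f(r, theta, phi): y = (y$0, y$1, y$2) = (r, theta, phi).\<close>

definition pd :: "(real^'n \<Rightarrow> real) \<Rightarrow> 'n \<Rightarrow> real^'n \<Rightarrow> real" where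
  "pd F k x = deriv (\<lambda>s. F (x + s *\<^sub>R axis k 1)) 0"

definition christoffel :: "(real^4 \<Rightarrow> real^4^4) \<Rightarrow> real^4 \<Rightarrow> 4 \<Rightarrow> 4 \<Rightarrow> 4 \<Rightarrow> real" where
  "christoffel g x k i j =
     (\<Sum>l\<in>UNIV. matrix_inv (g x) $ k $ l *
        (pd (\<lambda>z. g z $ l $ j) i x + pd (\<lambda>z. g z $ l $ i) j x - pd (\<lambda>z. g z $ i $ j) l x)) / 2"

definition graph_emb :: "(real^3 \<Rightarrow> real) \<Rightarrow> real^3 \<Rightarrow> real^4" where
  "graph_emb f y = (\<chi> \<mu>. if \<mu> = 0 then f y else if \<mu> = 1 then y $ 0
                          else if \<mu> = 2 then y $ 1 else y $ 2)"

definition graph_tangent :: "(real^3 \<Rightarrow> real) \<Rightarrow> real^3 \<Rightarrow> 3 \<Rightarrow> real^4" where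
  "graph_tangent f y i = (\<chi> \<mu>. pd (\<lambda>z. graph_emb f z $ \<mu>) i y)"

definition graph_hess :: "(real^3 \<Rightarrow> real) \<Rightarrow> real^3 \<Rightarrow> 3 \<Rightarrow> 3 \<Rightarrow> real^4" where
  "graph_hess f y i j = (\<chi> \<mu>. pd (\<lambda>z. pd (\<lambda>w. graph_emb f w $ \<mu>) j z) i y)"

definition graph_conormal :: "(real^3 \<Rightarrow> real) \<Rightarrow> real^3 \<Rightarrow> real^4" where
  "graph_conormal f y = (\<chi> \<mu>. if \<mu> = 0 then 1 else if \<mu> = 1 then - pd f 0 y
                              else if \<mu> = 2 then - pd f 1 y else - pd f 2 y)"

definition normal_sq :: "(real^4 \<Rightarrow> real^4^4) \<Rightarrow> (real^3 \<Rightarrow> real) \<Rightarrow> real^3 \<Rightarrow> real" where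
  "normal_sq g f y = (let x = graph_emb f y; \<nu> = graph_conormal f y in
     (\<Sum>\<mu>\<in>UNIV. \<Sum>\<kappa>\<in>UNIV. matrix_inv (g x) $ \<mu> $ \<kappa> * \<nu> $ \<mu> * \<nu> $ \<kappa>))"

text \<open>Unit normal (as a covector) n_mu, for a spacelike graph (normal_sq < 0).\<close>
definition unit_conormal :: "(real^4 \<Rightarrow> real^4^4) \<Rightarrow> (real^3 \<Rightarrow> real) \<Rightarrow> real^3 \<Rightarrow> real^4" where
  "unit_conormal g f y = (1 / sqrt (- normal_sq g f y)) *\<^sub>R graph_conormal f y"

text \<open>Second fundamental form K(e_i,e_j) = g(nabla_{e_i} n, e_j) = - g(n, nabla_{e_i} e_j).\<close>
definition sff :: "(real^4 \<Rightarrow> real^4^4) \<Rightarrow> (real^3 \<Rightarrow> real) \<Rightarrow> real^3 \<Rightarrow> 3 \<Rightarrow> 3 \<Rightarrow> real" where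
  "sff g f y i j = (let x = graph_emb f y; n = unit_conormal g f y;
                        e = graph_tangent f y in
     - (\<Sum>\<mu>\<in>UNIV. n $ \<mu> * (graph_hess f y i j $ \<mu> +
          (\<Sum>\<alpha>\<in>UNIV. \<Sum>\<beta>\<in>UNIV. christoffel g x \<mu> \<alpha> \<beta> * e i $ \<alpha> * e j $ \<beta>))))"

definition induced_metric :: "(real^4 \<Rightarrow> real^4^4) \<Rightarrow> (real^3 \<Rightarrow> real) \<Rightarrow> real^3 \<Rightarrow> 3 \<Rightarrow> 3 \<Rightarrow> real" where
  "induced_metric g f y i j = (let x = graph_emb f y; e = graph_tangent f y in
     (\<Sum>\<alpha>\<in>UNIV. \<Sum>\<beta>\<in>UNIV. g x $ \<alpha> $ \<beta> * e i $ \<alpha> * e j $ \<beta>))"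

text \<open>tr_{S_r} K: trace of K over the tangent space of the leaf S_r = {r = const}
  (spanned by e_theta = e_1, e_phi = e_2) with respect to the induced 2x2 metric sigma,
  i.e. sigma^{AB} K_{AB} with the 2x2 inverse written out.\<close>
definition leaf_trace_K :: "(real^4 \<Rightarrow> real^4^4) \<Rightarrow> (real^3 \<Rightarrow> real) \<Rightarrow> real^3 \<Rightarrow> real" where
  "leaf_trace_K g f y = (let h = induced_metric g f y; K = sff g f y;
       d = h 1 1 * h 2 2 - h 1 2 * h 2 1 in
     (h 2 2 * K 1 1 - h 1 2 * K 2 1 - h 2 1 * K 1 2 + h 1 1 * K 2 2) / d)"

definition solves_TMCF :: "(real^4 \<Rightarrow> real^4^4) \<Rightarrow> (real^3 \<Rightarrow> real) \<Rightarrow> (real^3) set \<Rightarrow> bool" where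
  "solves_TMCF g f U \<longleftrightarrow> (\<forall>y\<in>U. normal_sq g f y < 0 \<and> leaf_trace_K g f y = 0)"

definition kerr_rho2 :: "real \<Rightarrow> real \<Rightarrow> real \<Rightarrow> real" where
  "kerr_rho2 a r \<theta> = r\<^sup>2 + a\<^sup>2 * (cos \<theta>)\<^sup>2"
definition kerr_Delta :: "real \<Rightarrow> real \<Rightarrow> real \<Rightarrow> real" where
  "kerr_Delta m a r = r\<^sup>2 - 2 * m * r + a\<^sup>2"
definition kerr_Lambda :: "real \<Rightarrow> real \<Rightarrow> real \<Rightarrow> real \<Rightarrow> real" where
  "kerr_Lambda m a r \<theta> = (r\<^sup>2 + a\<^sup>2)\<^sup>2 - a\<^sup>2 * kerr_Delta m a r * (sin \<theta>)\<^sup>2"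

definition kerr_metric :: "real \<Rightarrow> real \<Rightarrow> real^4 \<Rightarrow> real^4^4" where
  "kerr_metric m a x = (let r = x $ 1; \<theta> = x $ 2; \<rho>2 = kerr_rho2 a r \<theta> in
     (\<chi> i j.
        if i = 0 \<and> j = 0 then - (1 - 2 * m * r / \<rho>2)
        else if (i = 0 \<and> j = 3) \<or> (i = 3 \<and> j = 0) then - 2 * m * a * r * (sin \<theta>)\<^sup>2 / \<rho>2
        else if i = 1 \<and> j = 1 then \<rho>2 / kerr_Delta m a r
        else if i = 2 \<and> j = 2 then \<rho>2
        else if i = 3 \<and> j = 3 then kerr_Lambda m a r \<theta> * (sin \<theta>)\<^sup>2 / \<rho>2
        else 0))"

definition kerr_rplus :: "real \<Rightarrow> real \<Rightarrow> real" where
  "kerr_rplus m a = m + sqrt (m\<^sup>2 - a\<^sup>2)"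

end

theory Submission imports Defs begin


lemma four0: "(4::4) = 0" by simp
lemma sum4: "sum f (UNIV::4 set) = f 0 + f 1 + f 2 + f 3"
  unfolding sum_4 four0 by (simp add: ac_simps)
lemma forall4: "(\<forall>i::4. P i) \<longleftrightarrow> P 0 \<and> P 1 \<and> P 2 \<and> P 3"
  unfolding forall_4 four0 by auto
lemma inv_block:
  fixes A :: "real^4^4"
  assumes z: "A$0$1 = 0" "A$0$2 = 0" "A$1$0 = 0" "A$1$2 = 0" "A$1$3 = 0"
     "A$2$0 = 0" "A$2$1 = 0" "A$2$3 = 0" "A$3$1 = 0" "A$3$2 = 0"
   and sym: "A$3$0 = A$0$3"
   and D: "A$0$0 * A$3$3 - A$0$3 * A$0$3 \<noteq> 0" and n1: "A$1$1 \<noteq> 0" and n2: "A$2$2 \<noteq> 0"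
  shows "matrix_inv A $ 0 $ 0 = A$3$3 / (A$0$0 * A$3$3 - A$0$3 * A$0$3)"
    "matrix_inv A $ 0 $ 1 = 0" "matrix_inv A $ 0 $ 2 = 0"
proof -
  define d where "d = A$0$0 * A$3$3 - A$0$3 * A$0$3"
  define B :: "real^4^4" where "B = (\<chi> i j. if i = 0 \<and> j = 0 then A$3$3/d
      else if (i = 0 \<and> j = 3) \<or> (i = 3 \<and> j = 0) then - A$0$3/d
      else if i = 3 \<and> j = 3 then A$0$0/d
      else if i = 1 \<and> j = 1 then 1/A$1$1
      else if i = 2 \<and> j = 2 then 1/A$2$2 else 0)"
  have dnz: "d \<noteq> 0" using D d_def by simp
  have dd: "A$0$0 * A$3$3 = d + A$0$3 * A$0$3" using d_def by simp
  have AB: "A ** B = mat 1"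
    unfolding matrix_matrix_mult_def mat_def vec_eq_iff forall4 sum4 B_def
    using z sym dnz n1 n2 by (simp add: dd field_simps)
  have BA: "B ** A = mat 1"
    unfolding matrix_matrix_mult_def mat_def vec_eq_iff forall4 sum4 B_def
    using z sym dnz n1 n2 by (simp add: dd field_simps)
  have "matrix_inv A = B"
  proof -
    have ex: "\<exists>A'. A ** A' = mat 1 \<and> A' ** A = mat 1" using AB BA by blast
    have s: "A ** matrix_inv A = mat 1 \<and> matrix_inv A ** A = mat 1"
      unfolding matrix_inv_def using someI_ex[OF ex] .
    have "matrix_inv A = matrix_inv A ** (A ** B)" using AB by simp
    also have "\<dots> = (matrix_inv A ** A) ** B" by (simp add: matrix_mul_assoc)
    also have "\<dots> = B" using s by simp
    finally show ?thesis .
  qed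
  then show "matrix_inv A $ 0 $ 0 = A$3$3 / (A$0$0 * A$3$3 - A$0$3 * A$0$3)"
    "matrix_inv A $ 0 $ 1 = 0" "matrix_inv A $ 0 $ 2 = 0"
    by (simp_all add: B_def d_def)
qed

lemma pd_zero:
  assumes "\<And>s. F (x + s *\<^sub>R axis k 1) = F x"
  shows "pd F k x = 0"
  unfolding pd_def assms by simp

lemma pd_lin:
  assumes "\<And>s. F (x + s *\<^sub>R axis k 1) = F x + s * c"
  shows "pd F k x = c"
  unfolding pd_def assms
  by (rule DERIV_imp_deriv) (auto intro!: derivative_eq_intros)

lemma kerr_id:
  fixes m a r S :: real
  defines "\<rho> \<equiv> r\<^sup>2 + a\<^sup>2 * (1 - S\<^sup>2)"
  defines "\<Delta> \<equiv> r\<^sup>2 - 2 * m * r + a\<^sup>2"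
  shows "(\<rho> - 2*m*r) * ((r\<^sup>2 + a\<^sup>2)\<^sup>2 - a\<^sup>2 * \<Delta> * S\<^sup>2) + 4*m\<^sup>2*a\<^sup>2*r\<^sup>2*S\<^sup>2 = \<Delta> * \<rho>\<^sup>2"
  unfolding \<rho>_def \<Delta>_def by algebra

lemma kerr_shift:
  assumes "k = 0 \<or> k = 3"
  shows "kerr_metric m a (z + s *\<^sub>R axis k 1) = kerr_metric m a z"
proof -
  have h1: "(z + s *\<^sub>R axis k 1) $ 1 = z $ 1" and h2: "(z + s *\<^sub>R axis k 1) $ 2 = z $ 2"
    using assms by (auto simp: axis_def)
  show ?thesis by (simp only: kerr_metric_def Let_def h1 h2)
qed

lemma kerr_pd0:
  assumes "k = 0 \<or> k = 3"
  shows "pd (\<lambda>z. kerr_metric m a z $ i $ j) k x = 0"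
  by (rule pd_zero) (simp add: kerr_shift[OF assms])

lemma kerr_zero:
  "kerr_metric m a z $ 0 $ 1 = 0" "kerr_metric m a z $ 0 $ 2 = 0"
  "kerr_metric m a z $ 1 $ 0 = 0" "kerr_metric m a z $ 1 $ 2 = 0" "kerr_metric m a z $ 1 $ 3 = 0"
  "kerr_metric m a z $ 2 $ 0 = 0" "kerr_metric m a z $ 2 $ 1 = 0" "kerr_metric m a z $ 2 $ 3 = 0"
  "kerr_metric m a z $ 3 $ 1 = 0" "kerr_metric m a z $ 3 $ 2 = 0"
  "kerr_metric m a z $ 3 $ 0 = kerr_metric m a z $ 0 $ 3"
  by (simp_all add: kerr_metric_def Let_def)

lemma kerr_pos:
  fixes m a r \<theta> :: real
  assumes m: "m > 0" and am: "\<bar>a\<bar> < m" and r: "r > kerr_rplus m a"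
    and th: "0 < \<theta>" "\<theta> < pi"
  shows "kerr_rho2 a r \<theta> > 0" "kerr_Delta m a r > 0" "kerr_Lambda m a r \<theta> > 0"
    "sin \<theta> > 0"
    "(- (1 - 2 * m * r / kerr_rho2 a r \<theta>)) * (kerr_Lambda m a r \<theta> * (sin \<theta>)\<^sup>2 / kerr_rho2 a r \<theta>)
      - (- 2 * m * a * r * (sin \<theta>)\<^sup>2 / kerr_rho2 a r \<theta>) * (- 2 * m * a * r * (sin \<theta>)\<^sup>2 / kerr_rho2 a r \<theta>)
     = - kerr_Delta m a r * (sin \<theta>)\<^sup>2"
proof -
  have "\<bar>a\<bar> * \<bar>a\<bar> < m * m" using am m by (intro mult_strict_mono) auto
  then have a2: "a\<^sup>2 < m\<^sup>2" by (simp add: power2_eq_square)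
  have sq: "sqrt (m\<^sup>2 - a\<^sup>2) \<ge> 0" using a2 by simp
  have rm: "r - m > sqrt (m\<^sup>2 - a\<^sup>2)" using r unfolding kerr_rplus_def by simp
  have r0: "r > 0" using rm sq m by linarith
  have "(sqrt (m\<^sup>2 - a\<^sup>2))\<^sup>2 = m\<^sup>2 - a\<^sup>2" using a2 by simp
  moreover have "(sqrt (m\<^sup>2 - a\<^sup>2))\<^sup>2 < (r - m)\<^sup>2" using rm sq by (intro power_strict_mono) auto
  ultimately have D: "kerr_Delta m a r > 0" unfolding kerr_Delta_def by (simp add: power2_eq_square algebra_simps)
  show "kerr_Delta m a r > 0" by (rule D)
  show rho: "kerr_rho2 a r \<theta> > 0" unfolding kerr_rho2_def using r0 by (simp add: add_pos_nonneg)
  show s: "sin \<theta> > 0" using th by (simp add: sin_gt_zero)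
  have s1: "(sin \<theta>)\<^sup>2 \<le> 1" by (simp add: abs_sin_le_one abs_square_le_1)
  have "a\<^sup>2 * kerr_Delta m a r * (sin \<theta>)\<^sup>2 \<le> a\<^sup>2 * kerr_Delta m a r"
    using D s1 by (simp add: mult_left_le)
  moreover have "a\<^sup>2 * kerr_Delta m a r < (r\<^sup>2 + a\<^sup>2)\<^sup>2"
  proof -
    have "(r\<^sup>2 + a\<^sup>2)\<^sup>2 - a\<^sup>2 * kerr_Delta m a r = (r\<^sup>2 + a\<^sup>2) * r\<^sup>2 + 2 * m * r * a\<^sup>2"
      unfolding kerr_Delta_def by algebra
    moreover have "(r\<^sup>2 + a\<^sup>2) * r\<^sup>2 > 0" using r0 by (simp add: add_pos_nonneg)
    moreover have "2 * m * r * a\<^sup>2 \<ge> 0" using r0 m by simp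
    ultimately show ?thesis by linarith
  qed
  ultimately show "kerr_Lambda m a r \<theta> > 0" unfolding kerr_Lambda_def by linarith
  have c: "(cos \<theta>)\<^sup>2 = 1 - (sin \<theta>)\<^sup>2" by (simp add: cos_squared_eq)
  have id: "(kerr_rho2 a r \<theta> - 2*m*r) * kerr_Lambda m a r \<theta> + 4*m\<^sup>2*a\<^sup>2*r\<^sup>2*(sin \<theta>)\<^sup>2
      = kerr_Delta m a r * (kerr_rho2 a r \<theta>)\<^sup>2"
    unfolding kerr_rho2_def kerr_Lambda_def c using kerr_id[of r a "sin \<theta>" m]
    by (simp add: kerr_Delta_def)
  show "(- (1 - 2 * m * r / kerr_rho2 a r \<theta>)) * (kerr_Lambda m a r \<theta> * (sin \<theta>)\<^sup>2 / kerr_rho2 a r \<theta>)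
      - (- 2 * m * a * r * (sin \<theta>)\<^sup>2 / kerr_rho2 a r \<theta>) * (- 2 * m * a * r * (sin \<theta>)\<^sup>2 / kerr_rho2 a r \<theta>)
     = - kerr_Delta m a r * (sin \<theta>)\<^sup>2"
  proof -
    let ?p = "kerr_rho2 a r \<theta>"
    have "?p \<noteq> 0" using rho by simp
    then show ?thesis
      using arg_cong[OF id, of "\<lambda>t. - t * (sin \<theta>)\<^sup>2 / ?p\<^sup>2"]
      by (simp add: field_simps power2_eq_square) algebra
  qed
qed


lemma pd_const: "pd (\<lambda>z. c) k x = 0"
  by (simp add: pd_def)

lemma emb_shift:
  "graph_emb (\<lambda>_. T0) (z + s *\<^sub>R axis i 1) $ \<mu> = graph_emb (\<lambda>_. T0) z $ \<mu> + s * (graph_emb (\<lambda>_. 0) (axis i 1) $ \<mu>)"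
  by (simp add: graph_emb_def)

lemma emb_pd: "pd (\<lambda>z. graph_emb (\<lambda>_. T0) z $ \<mu>) i z = graph_emb (\<lambda>_. 0) (axis i 1) $ \<mu>"
  by (rule pd_lin) (rule emb_shift)

lemma tangent_const: "graph_tangent (\<lambda>_. T0) y i = graph_emb (\<lambda>_. 0) (axis i 1)"
  by (simp add: graph_tangent_def emb_pd vec_eq_iff)

lemma hess_const: "graph_hess (\<lambda>_. T0) y i j = 0"
  by (simp add: graph_hess_def emb_pd pd_const vec_eq_iff)

lemma conormal_const: "graph_conormal (\<lambda>_. T0) y = (\<chi> \<mu>. if \<mu> = 0 then 1 else 0)"
  by (simp add: graph_conormal_def pd_const vec_eq_iff)

lemma e1: "graph_emb (\<lambda>_. 0) (axis (1::3) 1) = (\<chi> \<mu>. if \<mu> = 2 then 1 else 0)"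
  by (simp add: graph_emb_def axis_def vec_eq_iff forall4)

lemma e2: "graph_emb (\<lambda>_. 0) (axis (2::3) 1) = (\<chi> \<mu>. if \<mu> = 3 then 1 else 0)"
  by (simp add: graph_emb_def axis_def vec_eq_iff forall4)

theorem mainTheorem4:
  fixes m a T0 :: real
  assumes "m > 0" and "\<bar>a\<bar> < m"
  shows "solves_TMCF (kerr_metric m a) (\<lambda>_. T0)
           {y :: real^3. y $ 0 > kerr_rplus m a \<and> 0 < y $ 1 \<and> y $ 1 < pi}"
  unfolding solves_TMCF_def
proof
  fix y :: "real^3"
  assume "y \<in> {y :: real^3. y $ 0 > kerr_rplus m a \<and> 0 < y $ 1 \<and> y $ 1 < pi}"
  then have y: "y $ 0 > kerr_rplus m a" "0 < y $ 1" "y $ 1 < pi" by auto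
  define x where "x = graph_emb (\<lambda>_. T0) y"
  define G where "G = kerr_metric m a x"
  define r where "r = y $ 0"
  define th where "th = y $ 1"
  have x1: "x $ 1 = r" and x2: "x $ 2 = th" by (simp_all add: x_def r_def th_def graph_emb_def)
  note P = kerr_pos[OF assms y(1)[folded r_def] y(2,3)[folded th_def]]
  have G00: "G$0$0 = - (1 - 2 * m * r / kerr_rho2 a r th)"
    and G03: "G$0$3 = - 2 * m * a * r * (sin th)\<^sup>2 / kerr_rho2 a r th"
    and G11: "G$1$1 = kerr_rho2 a r th / kerr_Delta m a r"
    and G22: "G$2$2 = kerr_rho2 a r th"
    and G33: "G$3$3 = kerr_Lambda m a r th * (sin th)\<^sup>2 / kerr_rho2 a r th"
    by (simp_all add: G_def kerr_metric_def Let_def x1 x2)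
  have Dv: "G$0$0 * G$3$3 - G$0$3 * G$0$3 = - kerr_Delta m a r * (sin th)\<^sup>2"
    unfolding G00 G03 G33 by (rule P(5))
  have Dneg: "- kerr_Delta m a r * (sin th)\<^sup>2 < 0" using P(2,4) by simp
  have g33: "G$3$3 > 0" unfolding G33 using P(1,3,4) by simp
  note IB = inv_block[of G, OF kerr_zero[of m a x, folded G_def]]
  have I00: "matrix_inv G $ 0 $ 0 = G$3$3 / (- kerr_Delta m a r * (sin th)\<^sup>2)"
    and I01: "matrix_inv G $ 0 $ 1 = 0" and I02: "matrix_inv G $ 0 $ 2 = 0"
    using IB Dv Dneg P(1,2,4) unfolding G11 G22 by auto
  have ns: "normal_sq (kerr_metric m a) (\<lambda>_. T0) y = matrix_inv G $ 0 $ 0"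
    by (simp add: normal_sq_def Let_def conormal_const sum4 G_def x_def)
  have nsneg: "normal_sq (kerr_metric m a) (\<lambda>_. T0) y < 0"
    unfolding ns I00 using g33 Dneg by (simp add: divide_pos_neg)
  have I01': "matrix_inv (kerr_metric m a x) $ 0 $ 1 = 0" using I01 G_def by simp
  have I02': "matrix_inv (kerr_metric m a x) $ 0 $ 2 = 0" using I02 G_def by simp
  have z02: "pd (\<lambda>z. kerr_metric m a z $ 0 $ 2) k x = 0" for k
    by (simp only: kerr_zero pd_const)
  have z32: "pd (\<lambda>z. kerr_metric m a z $ 3 $ 2) k x = 0" for k
    by (simp only: kerr_zero pd_const)
  have p0: "pd (\<lambda>z. kerr_metric m a z $ i $ j) 0 x = 0" for i j by (rule kerr_pd0) simp
  have p3: "pd (\<lambda>z. kerr_metric m a z $ i $ j) 3 x = 0" for i j by (rule kerr_pd0) simp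
  have C22: "christoffel (kerr_metric m a) x 0 2 2 = 0"
    unfolding christoffel_def sum4 I01' I02' z02 z32 p0 p3 by simp
  have C33: "christoffel (kerr_metric m a) x 0 3 3 = 0"
    unfolding christoffel_def sum4 I01' I02' p0 p3 by simp
  have K11: "sff (kerr_metric m a) (\<lambda>_. T0) y 1 1 = 0"
    unfolding sff_def Let_def tangent_const hess_const e1 unit_conormal_def conormal_const sum4
    using C22 by (simp add: x_def)
  have K22: "sff (kerr_metric m a) (\<lambda>_. T0) y 2 2 = 0"
    unfolding sff_def Let_def tangent_const hess_const e2 unit_conormal_def conormal_const sum4
    using C33 by (simp add: x_def)
  have h12: "induced_metric (kerr_metric m a) (\<lambda>_. T0) y 1 2 = 0"
    "induced_metric (kerr_metric m a) (\<lambda>_. T0) y 2 1 = 0"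
    unfolding induced_metric_def Let_def tangent_const e1 e2 sum4
    by (simp_all add: kerr_zero)
  have "leaf_trace_K (kerr_metric m a) (\<lambda>_. T0) y = 0"
    unfolding leaf_trace_K_def Let_def h12 K11 K22 by simp
  then show "normal_sq (kerr_metric m a) (\<lambda>_. T0) y < 0 \<and> leaf_trace_K (kerr_metric m a) (\<lambda>_. T0) y = 0"
    using nsneg by simp
qed

end
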